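(* Let $\mathcal L(x,E)=\partial_x+\frac{\ell}{x}+e+p(x,E)e_0$ with $p(x,E)=x^{Mh^\vee}-E$, and let $h\in\mathfrak h$ satisfy $[h,e]=e$ and $[h,e_0]=-(h^\vee-1)e_0$. Then the gauge transformed connection $q(x,E)^{\operatorname{ad}h}\mathcal L(x,E):=q(x,E)^{h}\circ\mathcal L(x,E)\circ q(x,E)^{-h}$ satisfies $$q(x,E)^{\operatorname{ad}h}\mathcal L(x,E)=\partial_x+q(x,E)\Lambda+\frac{\ell-Mh}{x}+O(x^{-1-\delta}),\qquad x\to+\infty,$$ where $\Lambda=e_0+e$.
   Context: $\mathfrak g$ is a simple complex Lie algebra of type $A$, $D$ or $E$ with Chevalley generators $\{f_i,h_i,e_i\}_{i=1}^n$, Cartan subalgebra $\mathfrak h=\bigoplus\mathbb Ch_i$, dual Coxeter number $h^\vee$, normalized invariant form $(a|b)=\kappa(a,b)/h^\vee$ ($\kappa$ the Killing form). The affine Kac–Moody algebra is $\widehat{\mathfrak g}=\mathfrak g\otimes\mathbb C[t,t^{-1}]\oplus\mathbb Cc$ with $[a\otimes f,b\otimes g]=[a,b]\otimes fg+(a|b)\operatorname{res}_{t=0}(f'g\,dt)c$ and $c$ central; $e_0=a_0\otimes t$ with $a_0$ a nonzero element of the root space $\mathfrak g_{-\theta}$, $-\theta$ the lowest root; $e=\sum_{i=1}^ne_i$. Fix $\ell\in\mathfrak h$, $M>0$, $E\in\mathbb C$. Let $s=\lfloor\frac{M+1}{h^\vee M}\rfloor$, $\delta=M(h^\vee(1+s)-1)-1>0$,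 and $q(x,E)=x^M+\sum_{j=1}^s c_j(E)x^{M(1-h^\vee j)}$, where $c_j(E)=\binom{1/h^\vee}{j}(-E)^j$, so that $p(x,E)^{1/h^\vee}=q(x,E)+O(x^{-1-\delta})$ as $x\to+\infty$ (branches real positive for large positive $x$). *)

theory Defs
  imports "HOL-Analysis.Analysis" "HOL-Library.Landau_Symbols"
begin

text \<open>The simple Lie algebra g is modelled as the complex vector space complex^'d
  (d = dim g) with a Lie bracket br.  Indices of Chevalley generators run over 1..n.\<close>

definition lie_bracket :: "(complex^'d \<Rightarrow> complex^'d \<Rightarrow> complex^'d) \<Rightarrow> bool" where
  "lie_bracket br \<longleftrightarrow>
     (\<forall>a b c. br (a + b) c = br a c + br b c) \<and>
     (\<forall>a b c. br a (b + c) = br a b + br a c) \<and>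
     (\<forall>(k::complex) a b. br (k *s a) b = k *s br a b) \<and>
     (\<forall>(k::complex) a b. br a (k *s b) = k *s br a b) \<and>
     (\<forall>a. br a a = 0) \<and>
     (\<forall>a b c. br a (br b c) + br b (br c a) + br c (br a b) = 0)"

inductive_set lie_gen :: "(complex^'d \<Rightarrow> complex^'d \<Rightarrow> complex^'d) \<Rightarrow> (complex^'d) set \<Rightarrow> (complex^'d) set"
  for br S where
  gen: "x \<in> S \<Longrightarrow> x \<in> lie_gen br S"
| add: "x \<in> lie_gen br S \<Longrightarrow> y \<in> lie_gen br S \<Longrightarrow> x + y \<in> lie_gen br S"
| smult: "x \<in> lie_gen br S \<Longrightarrow> (k::complex) *s x \<in> lie_gen br S"
| brk: "x \<in> lie_gen br S \<Longrightarrow> y \<in> lie_gen br S \<Longrightarrow> br x y \<in> lie_gen br S"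

definition ADE_cartan :: "nat \<Rightarrow> (nat \<Rightarrow> nat \<Rightarrow> int) \<Rightarrow> bool" where
  "ADE_cartan n A \<longleftrightarrow> n \<ge> 1 \<and>
     (\<forall>i\<in>{1..n}. A i i = 2) \<and>
     (\<forall>i\<in>{1..n}. \<forall>j\<in>{1..n}. i \<noteq> j \<longrightarrow> A i j \<in> {0, -1}) \<and>
     (\<forall>i\<in>{1..n}. \<forall>j\<in>{1..n}. A i j = A j i) \<and>
     (\<forall>c::nat \<Rightarrow> real. (\<exists>i\<in>{1..n}. c i \<noteq> 0) \<longrightarrow>
        (\<Sum>i\<in>{1..n}. \<Sum>j\<in>{1..n}. c i * of_int (A i j) * c j) > 0) \<and>
     (\<forall>S. S \<subseteq> {1..n} \<and> S \<noteq> {} \<and> S \<noteq> {1..n} \<longrightarrow>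
        (\<exists>i\<in>S. \<exists>j\<in>{1..n} - S. A i j \<noteq> 0))"

text \<open>(br, e, f, hh) is a simple Lie algebra of type ADE with Cartan matrix A and Chevalley
  generators e_i, f_i, h_i (Chevalley--Serre relations, generation, independent h_i;
  by Serre's theorem this characterises g(A) up to isomorphism).\<close>
definition simple_ADE ::
  "(complex^'d \<Rightarrow> complex^'d \<Rightarrow> complex^'d) \<Rightarrow> nat \<Rightarrow> (nat \<Rightarrow> nat \<Rightarrow> int)
   \<Rightarrow> (nat \<Rightarrow> complex^'d) \<Rightarrow> (nat \<Rightarrow> complex^'d) \<Rightarrow> (nat \<Rightarrow> complex^'d) \<Rightarrow> bool" where
  "simple_ADE br n A e f hh \<longleftrightarrow>
     lie_bracket br \<and> ADE_cartan n A \<and>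
     (\<forall>i\<in>{1..n}. \<forall>j\<in>{1..n}. br (hh i) (hh j) = 0) \<and>
     (\<forall>i\<in>{1..n}. \<forall>j\<in>{1..n}. br (e i) (f j) = (if i = j then hh i else 0)) \<and>
     (\<forall>i\<in>{1..n}. \<forall>j\<in>{1..n}. br (hh i) (e j) = of_int (A i j) *s e j) \<and>
     (\<forall>i\<in>{1..n}. \<forall>j\<in>{1..n}. br (hh i) (f j) = - (of_int (A i j) *s f j)) \<and>
     (\<forall>i\<in>{1..n}. \<forall>j\<in>{1..n}. i \<noteq> j \<longrightarrow>
        (br (e i) ^^ nat (1 - A i j)) (e j) = 0 \<and> (br (f i) ^^ nat (1 - A i j)) (f j) = 0) \<and>
     lie_gen br (e ` {1..n} \<union> f ` {1..n} \<union> hh ` {1..n}) = UNIV \<and>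
     (\<forall>c::nat \<Rightarrow> complex. (\<Sum>i\<in>{1..n}. c i *s hh i) = 0 \<longrightarrow> (\<forall>i\<in>{1..n}. c i = 0))"

definition cartan :: "nat \<Rightarrow> (nat \<Rightarrow> complex^'d) \<Rightarrow> (complex^'d) set" where
  "cartan n hh = {x. \<exists>c::nat \<Rightarrow> complex. x = (\<Sum>i\<in>{1..n}. c i *s hh i)}"

text \<open>Weights are recorded by their values on h_1..h_n.  The weight
  - sum_i c_i alpha_i (alpha_i simple roots, alpha_i(h_j) = A j i).\<close>
definition neg_weight :: "nat \<Rightarrow> (nat \<Rightarrow> nat \<Rightarrow> int) \<Rightarrow> (nat \<Rightarrow> nat) \<Rightarrow> nat \<Rightarrow> complex" where
  "neg_weight n A c = (\<lambda>j. - (\<Sum>i\<in>{1..n}. of_int (A j i) * of_nat (c i)))"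

definition root_space ::
  "(complex^'d \<Rightarrow> complex^'d \<Rightarrow> complex^'d) \<Rightarrow> nat \<Rightarrow> (nat \<Rightarrow> complex^'d) \<Rightarrow> (nat \<Rightarrow> complex) \<Rightarrow> (complex^'d) set" where
  "root_space br n hh w = {a. \<forall>j\<in>{1..n}. br (hh j) a = w j *s a}"

definition is_root ::
  "(complex^'d \<Rightarrow> complex^'d \<Rightarrow> complex^'d) \<Rightarrow> nat \<Rightarrow> (nat \<Rightarrow> complex^'d) \<Rightarrow> (nat \<Rightarrow> complex) \<Rightarrow> bool" where
  "is_root br n hh w \<longleftrightarrow> (\<exists>j\<in>{1..n}. w j \<noteq> 0) \<and> (\<exists>a. a \<noteq> 0 \<and> a \<in> root_space br n hh w)"

text \<open>c are the coefficients of the highest root theta = sum c_i alpha_i, characterised by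
  -theta being the lowest root: every root minus (-theta) is a nonnegative integer
  combination of simple roots.\<close>
definition theta_coeffs_prop ::
  "(complex^'d \<Rightarrow> complex^'d \<Rightarrow> complex^'d) \<Rightarrow> nat \<Rightarrow> (nat \<Rightarrow> nat \<Rightarrow> int) \<Rightarrow> (nat \<Rightarrow> complex^'d) \<Rightarrow> (nat \<Rightarrow> nat) \<Rightarrow> bool" where
  "theta_coeffs_prop br n A hh c \<longleftrightarrow>
     (\<forall>i. i \<notin> {1..n} \<longrightarrow> c i = 0) \<and>
     is_root br n hh (neg_weight n A c) \<and>
     (\<forall>w. is_root br n hh w \<longrightarrow>
        (\<exists>d::nat \<Rightarrow> nat. \<forall>j\<in>{1..n}.
           w j = neg_weight n A c j + (\<Sum>i\<in>{1..n}. of_int (A j i) * of_nat (d i))))"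

definition theta_coeffs where
  "theta_coeffs br n A hh = (THE c. theta_coeffs_prop br n A hh c)"

text \<open>Dual Coxeter number: 1 + sum of the comarks (= marks, simply laced).\<close>
definition dual_coxeter where
  "dual_coxeter br n A hh = 1 + (\<Sum>i\<in>{1..n}. theta_coeffs br n A hh i)"

definition lowest_root_space where
  "lowest_root_space br n A hh = root_space br n hh (neg_weight n A (theta_coeffs br n A hh))"

text \<open>Elements of the affine algebra g[t,t^-1] + C c: the coefficient of t^k, and the
  central component.\<close>
type_synonym 'd affine = "(int \<Rightarrow> complex^'d) \<times> complex"

definition q_ad :: "(complex^'d \<Rightarrow> complex^'d \<Rightarrow> complex^'d) \<Rightarrow> complex^'d \<Rightarrow> complex \<Rightarrow> complex^'d \<Rightarrow> complex^'d" where
  "q_ad br h q a = (\<Sum>k. ((Ln q) ^ k / fact k) *s ((br h ^^ k) a))"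

text \<open>A connection d/dx + A(x) is represented by A :: real => affine.  The gauge transform
  q^h o (d/dx + A) o q^(-h) = d/dx + q^(ad h) A - (q'/q) h; since h is a constant element
  of the Cartan subalgebra, ad h acts coefficientwise and kills the centre.\<close>
definition gauge :: "(complex^'d \<Rightarrow> complex^'d \<Rightarrow> complex^'d) \<Rightarrow> complex^'d \<Rightarrow> (real \<Rightarrow> complex)
   \<Rightarrow> (real \<Rightarrow> 'd affine) \<Rightarrow> (real \<Rightarrow> 'd affine)" where
  "gauge br h Q A = (\<lambda>x. ((\<lambda>k. q_ad br h (Q x) (fst (A x) k)
        - (if k = 0 then (vector_derivative Q (at x) / Q x) *s h else 0)), snd (A x)))"

definition p_fun :: "real \<Rightarrow> nat \<Rightarrow> complex \<Rightarrow> real \<Rightarrow> complex" where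
  "p_fun M hv E x = of_real (x powr (M * real hv)) - E"

definition s_idx :: "real \<Rightarrow> nat \<Rightarrow> nat" where
  "s_idx M hv = nat \<lfloor>(M + 1) / (real hv * M)\<rfloor>"

definition delta :: "real \<Rightarrow> nat \<Rightarrow> real" where
  "delta M hv = M * (real hv * (1 + real (s_idx M hv)) - 1) - 1"

definition c_coef :: "nat \<Rightarrow> complex \<Rightarrow> nat \<Rightarrow> complex" where
  "c_coef hv E j = ((1 / of_nat hv) gchoose j) * (- E) ^ j"

definition q_fun :: "real \<Rightarrow> nat \<Rightarrow> complex \<Rightarrow> real \<Rightarrow> complex" where
  "q_fun M hv E x = of_real (x powr M)
     + (\<Sum>j\<in>{1..s_idx M hv}. c_coef hv E j * of_real (x powr (M * (1 - real hv * real j))))"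

text \<open>L(x,E) = d/dx + l/x + e + p(x,E) e_0, e_0 = a0 (x) t.\<close>
definition L_conn :: "complex^'d \<Rightarrow> complex^'d \<Rightarrow> complex^'d \<Rightarrow> real \<Rightarrow> nat \<Rightarrow> complex \<Rightarrow> real \<Rightarrow> 'd affine" where
  "L_conn l e a0 M hv E x =
     ((\<lambda>k. if k = 0 then (of_real (1 / x) :: complex) *s l + e
           else if k = 1 then p_fun M hv E x *s a0 else 0), 0)"

definition target_conn :: "complex^'d \<Rightarrow> complex^'d \<Rightarrow> complex^'d \<Rightarrow> complex^'d \<Rightarrow> real \<Rightarrow> nat \<Rightarrow> complex \<Rightarrow> real \<Rightarrow> 'd affine" where
  "target_conn l h e a0 M hv E x =
     ((\<lambda>k. if k = 0 then q_fun M hv E x *s e + (of_real (1 / x) :: complex) *s (l - (of_real M :: complex) *s h)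
           else if k = 1 then q_fun M hv E x *s a0 else 0), 0)"

end

theory Submission
  imports Defs "HOL-Computational_Algebra.Polynomial_FPS"
begin


lemma bl_smult: "bounded_linear (\<lambda>c::complex. c *s (w::complex^'d))"
proof (rule bounded_linear_intro[where K="norm w"])
  show "\<And>x y. (x+y) *s w = x *s w + y *s w" by (rule vector_sadd_rdistrib)
  show "\<And>r x. (r *\<^sub>R x) *s w = r *\<^sub>R (x *s w)" by (vector scaleR_conv_of_real)
  show "norm (x *s w) \<le> norm x * norm w" for x
  proof -
    have "norm (x *s w) = L2_set (\<lambda>i. norm x * norm (w$i)) UNIV"
      unfolding norm_vec_def by (simp add: norm_mult)
    also have "\<dots> = norm x * norm w"
      unfolding norm_vec_def by (simp add: L2_set_right_distrib)
    finally show ?thesis by simp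
  qed
qed

lemma norm_smult_vec: "norm ((c::complex) *s (w::complex^'d)) = norm c * norm w"
proof -
    have "norm (c *s w) = L2_set (\<lambda>i. norm c * norm (w$i)) UNIV"
      unfolding norm_vec_def by (simp add: norm_mult)
    also have "\<dots> = norm c * norm w"
      unfolding norm_vec_def by (simp add: L2_set_right_distrib)
    finally show ?thesis by simp
qed

context
  fixes br :: "complex^'d \<Rightarrow> complex^'d \<Rightarrow> complex^'d"
  assumes lb: "lie_bracket br"
begin

lemma br_addL: "br (a + b) c = br a c + br b c" using lb unfolding lie_bracket_def by blast
lemma br_addR: "br a (b + c) = br a b + br a c" using lb unfolding lie_bracket_def by blast
lemma br_smL: "br (k *s a) b = k *s br a b" using lb unfolding lie_bracket_def by blast
lemma br_smR: "br a (k *s b) = k *s br a b" using lb unfolding lie_bracket_def by blast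
lemma br_0L: "br 0 b = 0" using br_addL[of 0 0 b] by simp
lemma br_0R: "br a 0 = 0" using br_addR[of a 0 0] by simp
lemma br_sumL: "finite S \<Longrightarrow> br (sum f S) b = (\<Sum>i\<in>S. br (f i) b)"
  by (induction S rule: finite_induct) (auto simp: br_0L br_addL)
lemma br_sumR: "finite S \<Longrightarrow> br b (sum f S) = (\<Sum>i\<in>S. br b (f i))"
  by (induction S rule: finite_induct) (auto simp: br_0R br_addR)

lemma funpow_br:
  assumes "br h u = 0" "br h w = c *s w"
  shows "(br h ^^ k) (u + w) = (if k = 0 then u else 0) + (c ^ k) *s w"
proof (induction k)
  case 0 then show ?case by simp
next
  case (Suc k)
  have "(br h ^^ Suc k) (u + w) = br h ((br h ^^ k) (u + w))" by simp
  also have "\<dots> = (c ^ Suc k) *s w"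
    using Suc assms by (auto simp: br_addR br_smR br_0R vector_smult_assoc mult.commute)
  finally show ?case by simp
qed

lemma q_ad_eig:
  assumes "br h u = 0" "br h w = c *s w"
  shows "q_ad br h q (u + w) = u + exp (c * Ln q) *s w"
proof -
  have s1: "(\<lambda>k. if k = 0 then u else 0) sums u" using sums_single[of 0 "\<lambda>_. u"] by simp
  have e: "(\<lambda>k. (c * Ln q) ^ k / fact k) sums exp (c * Ln q)"
    using exp_converges[of "c * Ln q"] by (simp add: scaleR_conv_of_real divide_inverse mult.commute)
  have s2: "(\<lambda>k. ((c * Ln q) ^ k / fact k) *s w) sums (exp (c * Ln q) *s w)"
    by (rule bounded_linear.sums[OF bl_smult e])
  have "(\<lambda>k. ((Ln q) ^ k / fact k) *s ((br h ^^ k) (u + w))) =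
        (\<lambda>k. (if k = 0 then u else 0) + ((c * Ln q) ^ k / fact k) *s w)"
    by (rule ext) (simp add: funpow_br[OF assms] vector_add_ldistrib vector_smult_assoc power_mult_distrib)
  then have "(\<lambda>k. ((Ln q) ^ k / fact k) *s ((br h ^^ k) (u + w))) sums (u + exp (c * Ln q) *s w)"
    using sums_add[OF s1 s2] by simp
  then show ?thesis unfolding q_ad_def by (rule sums_unique[symmetric])
qed

end



lemma fps_pow_trunc:
  assumes "\<forall>k\<le>s. fps_nth f k = fps_nth g k"
  shows "\<forall>k\<le>s. fps_nth (f ^ n) k = fps_nth (g ^ n) k"
proof (induction n)
  case 0 then show ?case by simp
next
  case (Suc n)
  show ?case
  proof (intro allI impI)
    fix k assume k: "k \<le> s"
    have "fps_nth (f ^ Suc n) k = (\<Sum>i=0..k. fps_nth f i * fps_nth (f^n) (k - i))" by (simp add: fps_mult_nth)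
    also have "\<dots> = (\<Sum>i=0..k. fps_nth g i * fps_nth (g^n) (k - i))"
      using Suc assms k by (intro sum.cong) auto
    also have "\<dots> = fps_nth (g ^ Suc n) k" by (simp add: fps_mult_nth)
    finally show "fps_nth (f ^ Suc n) k = fps_nth (g ^ Suc n) k" .
  qed
qed

definition Tpol :: "nat \<Rightarrow> nat \<Rightarrow> complex poly" where
  "Tpol hv s = (\<Sum>j\<le>s. monom ((1 / of_nat hv) gchoose j) j)"

lemma coeff_Tpol: "coeff (Tpol hv s) k = (if k \<le> s then (1 / of_nat hv) gchoose k else 0)"
  unfolding Tpol_def by (simp add: coeff_sum coeff_monom)

lemma poly_Tpol: "poly (Tpol hv s) z = (\<Sum>j\<le>s. ((1 / of_nat hv) gchoose j) * z ^ j)"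
  unfolding Tpol_def by (simp add: poly_sum poly_monom)

lemma coeff_Tpol_pow:
  assumes "hv \<ge> 1" "k \<le> s"
  shows "coeff (Tpol hv s ^ hv - [:1,1:]) k = 0"
proof -
  have base: "\<forall>k\<le>s. fps_nth (fps_of_poly (Tpol hv s)) k = fps_nth (fps_binomial (1 / of_nat hv :: complex)) k"
    by (simp add: coeff_Tpol)
  have pw: "fps_binomial (1 / of_nat hv :: complex) ^ hv = fps_of_poly [:1,1:]"
    using assms by (simp add: fps_binomial_power fps_binomial_1 fps_of_poly_linear')
  have "coeff (Tpol hv s ^ hv) k = fps_nth (fps_of_poly (Tpol hv s) ^ hv) k"
    by (simp add: fps_of_poly_power[symmetric])
  also have "\<dots> = fps_nth (fps_binomial (1 / of_nat hv :: complex) ^ hv) k"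
    using fps_pow_trunc[OF base] assms by blast
  also have "\<dots> = coeff [:1,1:] k" by (simp add: pw)
  finally show ?thesis by (simp add: coeff_diff)
qed

lemma binom_trunc_bound:
  assumes "hv \<ge> 1"
  shows "\<exists>C. \<forall>z::complex. norm z \<le> 1 \<longrightarrow>
     norm ((\<Sum>j\<le>s. ((1 / of_nat hv) gchoose j) * z ^ j) ^ hv - (1 + z)) \<le> C * norm z ^ (s+1)"
proof -
  define P where "P = Tpol hv s ^ hv - [:1,1:]"
  have ev: "(\<Sum>j\<le>s. ((1 / of_nat hv) gchoose j) * z ^ j) ^ hv - (1 + z) = poly P z" for z
    by (simp add: P_def poly_Tpol)
  show ?thesis
  proof (intro exI allI impI)
    fix z :: complex assume z: "norm z \<le> 1"
    have "norm (poly P z) = norm (\<Sum>i\<le>degree P. coeff P i * z ^ i)" by (simp add: poly_altdef)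
    also have "\<dots> \<le> (\<Sum>i\<le>degree P. norm (coeff P i * z ^ i))" by (rule norm_sum)
    also have "\<dots> \<le> (\<Sum>i\<le>degree P. norm (coeff P i) * norm z ^ (s+1))"
    proof (intro sum_mono)
      fix i assume "i \<in> {..degree P}"
      show "norm (coeff P i * z ^ i) \<le> norm (coeff P i) * norm z ^ (s+1)"
      proof (cases "i \<le> s")
        case True then show ?thesis using coeff_Tpol_pow[OF assms True] by (simp add: P_def)
      next
        case False
        then have "norm z ^ i \<le> norm z ^ (s+1)" using z by (intro power_decreasing) auto
        then show ?thesis by (simp add: norm_mult norm_power mult_left_mono)
      qed
    qed
    also have "\<dots> = (\<Sum>i\<le>degree P. norm (coeff P i)) * norm z ^ (s+1)" by (simp add: sum_distrib_right)
    finally show "norm ((\<Sum>j\<le>s. ((1 / of_nat hv) gchoose j) * z ^ j) ^ hv - (1 + z))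
       \<le> (\<Sum>i\<le>degree P. norm (coeff P i)) * norm z ^ (s+1)" by (simp add: ev)
  qed
qed




definition Tz :: "nat \<Rightarrow> nat \<Rightarrow> complex \<Rightarrow> complex" where
  "Tz hv s z = (\<Sum>j\<le>s. ((1 / of_nat hv) gchoose j) * z ^ j)"
definition Dz :: "nat \<Rightarrow> nat \<Rightarrow> complex \<Rightarrow> complex" where
  "Dz hv s z = (\<Sum>j\<le>s. of_nat j * ((1 / of_nat hv) gchoose j) * z ^ j)"
definition zz :: "real \<Rightarrow> nat \<Rightarrow> complex \<Rightarrow> real \<Rightarrow> complex" where
  "zz M hv E x = - E * of_real (x powr (- (M * real hv)))"

lemma powr_pow_aux: "x > 0 \<Longrightarrow> (x powr a) ^ j = x powr (a * real j)"
  by (metis powr_powr powr_realpow powr_gt_zero)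

lemma term_rep:
  assumes "x > 0"
  shows "c_coef hv E j * of_real (x powr (M * (1 - real hv * real j)))
       = of_real (x powr M) * (((1 / of_nat hv) gchoose j) * zz M hv E x ^ j)"
proof -
  have "x powr (M * (1 - real hv * real j)) = x powr M * (x powr (- (M * real hv))) ^ j"
    using assms by (simp add: powr_pow_aux powr_add[symmetric] algebra_simps)
  then show ?thesis
    by (simp add: c_coef_def zz_def power_mult_distrib) (metis minus_mult_left power_mult_distrib)
qed

lemma q_rep:
  assumes "x > 0"
  shows "q_fun M hv E x = of_real (x powr M) * Tz hv (s_idx M hv) (zz M hv E x)"
proof -
  have "Tz hv (s_idx M hv) (zz M hv E x) = 1 + (\<Sum>j\<in>{1..s_idx M hv}. ((1 / of_nat hv) gchoose j) * zz M hv E x ^ j)"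
    unfolding Tz_def by (simp add: atMost_atLeast0 sum.atLeast_Suc_atMost)
  then show ?thesis
    unfolding q_fun_def using term_rep[OF assms] by (simp add: sum_distrib_left distrib_left)
qed

lemma p_rep:
  assumes "x > 0"
  shows "p_fun M hv E x = of_real (x powr M) ^ hv * (1 + zz M hv E x)"
proof -
  have a: "(x powr M) ^ hv = x powr (M * real hv)" using powr_pow_aux[OF assms, of M hv] by simp
  have b: "x powr (M * real hv) * x powr (- (M * real hv)) = 1" using assms by (simp add: powr_add[symmetric])
  have "of_real (x powr M) ^ hv * (1 + zz M hv E x) = of_real (x powr (M * real hv)) - E * of_real (x powr (M * real hv) * x powr (- (M * real hv)))"
    unfolding zz_def a[symmetric] by (simp add: algebra_simps)
  then show ?thesis unfolding p_fun_def b by simp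
qed

lemma ofr_powr_deriv:
  assumes "x > 0"
  shows "((\<lambda>x. complex_of_real (x powr r)) has_vector_derivative
            of_real (r / x) * of_real (x powr r)) (at x)"
proof -
  have "((\<lambda>x. complex_of_real (x powr r)) has_vector_derivative of_real (r * x powr (r - 1))) (at x)"
    by (intro has_vector_derivative_of_real has_real_derivative_powr assms)
  moreover have "r * x powr (r - 1) = r / x * x powr r"
    using assms by (simp add: powr_diff)
  ultimately show ?thesis by simp
qed

lemma q_deriv:
  assumes "x > 0"
  shows "vector_derivative (q_fun M hv E) (at x) =
    of_real (x powr M) / of_real x * (of_real M * Tz hv (s_idx M hv) (zz M hv E x)
       - of_real M * of_nat hv * Dz hv (s_idx M hv) (zz M hv E x))"
proof -
  let ?s = "s_idx M hv" and ?z = "zz M hv E x"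
  let ?b = "\<lambda>j. (1 / of_nat hv :: complex) gchoose j"
  have qf: "q_fun M hv E = (\<lambda>x. of_real (x powr M) + (\<Sum>j\<in>{1..?s}. c_coef hv E j * of_real (x powr (M * (1 - real hv * real j)))))"
    by (rule ext) (simp add: q_fun_def)
  have d: "(q_fun M hv E has_vector_derivative
      of_real (M / x) * of_real (x powr M) + (\<Sum>j\<in>{1..?s}. c_coef hv E j * (of_real ((M * (1 - real hv * real j)) / x) * of_real (x powr (M * (1 - real hv * real j)))))) (at x)"
    unfolding qf
    by (intro has_vector_derivative_add has_vector_derivative_sum has_vector_derivative_mult_right ofr_powr_deriv assms)
  have "of_real (M / x) * of_real (x powr M) + (\<Sum>j\<in>{1..?s}. c_coef hv E j * (of_real ((M * (1 - real hv * real j)) / x) * of_real (x powr (M * (1 - real hv * real j)))))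
     = of_real (x powr M) / of_real x * (of_real M + (\<Sum>j\<in>{1..?s}. (of_real M - of_real M * of_nat hv * of_nat j) * (?b j * ?z ^ j)))"
  proof -
    have t: "c_coef hv E j * (of_real ((M * (1 - real hv * real j)) / x) * of_real (x powr (M * (1 - real hv * real j))))
      = of_real (x powr M) / of_real x * ((of_real M - of_real M * of_nat hv * of_nat j) * (?b j * ?z ^ j))" for j
    proof -
      have "c_coef hv E j * (of_real ((M * (1 - real hv * real j)) / x) * of_real (x powr (M * (1 - real hv * real j))))
          = of_real ((M * (1 - real hv * real j)) / x) * (c_coef hv E j * of_real (x powr (M * (1 - real hv * real j))))"
        by (simp add: algebra_simps)
      also have "\<dots> = of_real ((M * (1 - real hv * real j)) / x) * (of_real (x powr M) * (?b j * ?z ^ j))"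
        by (simp add: term_rep[OF assms])
      finally show ?thesis by (simp add: field_simps)
    qed
    have m: "complex_of_real (M / x) * of_real (x powr M) = of_real (x powr M) / of_real x * of_real M"
      by simp
    show ?thesis unfolding t m by (simp add: sum_distrib_left distrib_left)
  qed
  also have "\<dots> = of_real (x powr M) / of_real x * (of_real M * Tz hv ?s ?z
       - of_real M * of_nat hv * Dz hv ?s ?z)"
    unfolding Tz_def Dz_def
    by (simp add: atMost_atLeast0 sum.atLeast_Suc_atMost sum_distrib_left algebra_simps sum_subtractf)
  finally show ?thesis using vector_derivative_at[OF d] by simp
qed




lemma sum_lin_bound:
  fixes a :: "nat \<Rightarrow> complex"
  assumes "a 0 = 0" "norm z \<le> 1"
  shows "norm (\<Sum>j\<le>s. a j * z^j) \<le> (\<Sum>j\<le>s. norm (a j)) * norm z"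
proof -
  have "norm (\<Sum>j\<le>s. a j * z^j) \<le> (\<Sum>j\<le>s. norm (a j * z^j))" by (rule norm_sum)
  also have "\<dots> \<le> (\<Sum>j\<le>s. norm (a j) * norm z)"
  proof (intro sum_mono)
    fix j assume "j \<in> {..s}"
    show "norm (a j * z ^ j) \<le> norm (a j) * norm z"
    proof (cases "j = 0")
      case True then show ?thesis using assms by simp
    next
      case False
      then have "norm z ^ j \<le> norm z ^ 1" using assms by (intro power_decreasing) auto
      then show ?thesis by (simp add: norm_mult norm_power mult_left_mono)
    qed
  qed
  also have "\<dots> = (\<Sum>j\<le>s. norm (a j)) * norm z" by (simp add: sum_distrib_right)
  finally show ?thesis .
qed

lemma Tz_minus1: "Tz hv s z - 1 = (\<Sum>j\<le>s. (if j = 0 then 0 else (1 / of_nat hv) gchoose j) * z^j)"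
  unfolding Tz_def by (simp add: atMost_atLeast0 sum.atLeast_Suc_atMost)

lemma delta_le:
  assumes "hv \<ge> 1" "M > 0"
  shows "delta M hv \<le> M * real hv"
proof -
  have y: "(M + 1) / (real hv * M) \<ge> 0" using assms by simp
  have "real (s_idx M hv) \<le> (M + 1) / (real hv * M)"
    unfolding s_idx_def using y by (simp add: of_nat_nat)
  then have "real hv * M * real (s_idx M hv) \<le> M + 1"
    using assms by (simp add: field_simps)
  then show ?thesis unfolding delta_def by (simp add: algebra_simps)
qed




lemma main_asym:
  assumes hv: "hv \<ge> 1" and M: "M > 0"
  shows "\<exists>K. eventually (\<lambda>x. q_fun M hv E x \<noteq> 0 \<and>
      norm (inverse (q_fun M hv E x ^ (hv - 1)) * p_fun M hv E x - q_fun M hv E x) \<le> K * x powr (-1 - delta M hv) \<and>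
      norm (of_real M / of_real x - vector_derivative (q_fun M hv E) (at x) / q_fun M hv E x) \<le> K * x powr (-1 - delta M hv)) at_top"
proof -
  define s where "s = s_idx M hv"
  define m where "m = hv - 1"
  have hvm: "hv = Suc m" using hv by (simp add: m_def)
  obtain C where C: "\<And>z. norm z \<le> 1 \<Longrightarrow> norm (Tz hv s z ^ hv - (1 + z)) \<le> C * norm z ^ (s+1)"
    using binom_trunc_bound[OF hv, of s] unfolding Tz_def by blast
  define S3 where "S3 = (\<Sum>j\<le>s. norm (if j = 0 then 0 else (1 / of_nat hv :: complex) gchoose j))"
  define C2 where "C2 = (\<Sum>j\<le>s. norm (of_nat j * ((1 / of_nat hv :: complex) gchoose j)))"
  have S3: "S3 \<ge> 0" unfolding S3_def by (intro sum_nonneg) auto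
  have C2: "C2 \<ge> 0" unfolding C2_def by (intro sum_nonneg) auto
  define r where "r = 1 / (2 * (S3 + 1))"
  have r0: "r > 0" using S3 by (simp add: r_def)
  have r1: "r \<le> 1" using S3 by (simp add: r_def field_simps)
  have rS: "S3 * r \<le> 1/2" using S3 by (simp add: r_def field_simps)
  define K1 where "K1 = \<bar>C\<bar> * 2 ^ m * norm E ^ (s+1)"
  define K2 where "K2 = 2 * M * real hv * C2 * norm E"
  have K1: "K1 \<ge> 0" unfolding K1_def by simp
  have K2: "K2 \<ge> 0" unfolding K2_def using M C2 by simp
  have lim: "((\<lambda>x::real. x powr (- (M * real hv))) \<longlongrightarrow> 0) at_top"
    using M hv by (intro tendsto_neg_powr filterlim_ident) auto
  have ev2: "eventually (\<lambda>x::real. x powr (- (M * real hv)) < r / (norm E + 1)) at_top"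
  proof -
    have "r / (norm E + 1) > 0" using r0 by (intro divide_pos_pos) (auto intro: add_nonneg_pos)
    then show ?thesis using order_tendstoD(2)[OF lim] by blast
  qed
  have ev1: "eventually (\<lambda>x::real. x \<ge> 1) at_top" by (rule eventually_ge_at_top)
  show ?thesis
  proof (rule exI[of _ "K1 + K2"], rule eventually_mono[OF eventually_conj[OF ev1 ev2]], elim conjE)
    fix x :: real
    assume x1: "x \<ge> 1" and xu: "x powr (- (M * real hv)) < r / (norm E + 1)"
    have x0: "x > 0" using x1 by simp
    define u where "u = x powr (- (M * real hv))"
    define z where "z = zz M hv E x"
    define T where "T = Tz hv s z"
    define D where "D = Dz hv s z"
    define X where "X = complex_of_real (x powr M)"
    have u0: "u > 0" unfolding u_def using x0 by simp
    have nz: "norm z = norm E * u" unfolding z_def zz_def u_def using u0 by (simp add: norm_mult)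
    have "norm E * u \<le> r"
    proof -
      have "norm E * u \<le> norm E * (r / (norm E + 1))" using xu unfolding u_def
        by (intro mult_left_mono) auto
      also have "\<dots> = r * (norm E / (norm E + 1))" by simp
      also have "\<dots> \<le> r * 1"
        proof (rule mult_left_mono)
        have pE: "0 < norm E + 1" using norm_ge_zero[of E] by linarith
        then show "norm E / (norm E + 1) \<le> 1" by (simp add: divide_le_eq_1)
      qed (use r0 in simp)
      finally have "norm E * u \<le> r * 1" .
      then show ?thesis by simp
    qed
    then have zr: "norm z \<le> r" using nz by simp
    then have z1: "norm z \<le> 1" using r1 by simp
    have "norm (T - 1) \<le> S3 * norm z"
      unfolding T_def S3_def Tz_minus1 by (rule sum_lin_bound) (use z1 in auto)
    also have "\<dots> \<le> S3 * r" using zr S3 by (intro mult_left_mono)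
    finally have T1: "norm (T - 1) \<le> 1/2" using rS by simp
    have Th: "norm T \<ge> 1/2"
      using norm_triangle_ineq2[of 1 T] T1 by (simp add: norm_minus_commute)
    then have T0: "T \<noteq> 0" by auto
    have D: "norm D \<le> C2 * norm z"
      unfolding D_def C2_def Dz_def by (rule sum_lin_bound) (use z1 in auto)
    have X0: "X \<noteq> 0" unfolding X_def using x0 by simp
    have nX: "norm X = x powr M" unfolding X_def by simp
    have q: "q_fun M hv E x = X * T" unfolding X_def T_def z_def s_def by (rule q_rep[OF x0])
    have p: "p_fun M hv E x = X ^ hv * (1 + z)" unfolding X_def z_def by (rule p_rep[OF x0])
    have qd: "vector_derivative (q_fun M hv E) (at x) = X / of_real x * (of_real M * T - of_real M * of_nat hv * D)"
      unfolding X_def T_def D_def z_def s_def by (rule q_deriv[OF x0])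
    have dl: "delta M hv \<le> M * real hv" by (rule delta_le[OF hv M])
    show "q_fun M hv E x \<noteq> 0 \<and>
      norm (inverse (q_fun M hv E x ^ (hv - 1)) * p_fun M hv E x - q_fun M hv E x) \<le> (K1 + K2) * x powr (-1 - delta M hv) \<and>
      norm (of_real M / of_real x - vector_derivative (q_fun M hv E) (at x) / q_fun M hv E x) \<le> (K1 + K2) * x powr (-1 - delta M hv)"
    proof (intro conjI)
      show "q_fun M hv E x \<noteq> 0" using q X0 T0 by simp
      have e1: "inverse (q_fun M hv E x ^ (hv - 1)) * p_fun M hv E x - q_fun M hv E x
          = X * ((1 + z) - T ^ hv) / T ^ m"
      proof -
        have "inverse ((X * T) ^ m) * (X ^ Suc m * (1 + z)) - X * T = X * ((1 + z) - T ^ Suc m) / T ^ m"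
          using X0 T0 by (simp add: field_simps)
        then show ?thesis unfolding q p by (simp add: hvm)
      qed
      have "norm (X * ((1 + z) - T ^ hv) / T ^ m) = x powr M * norm (T ^ hv - (1 + z)) / norm T ^ m"
        by (simp add: norm_mult norm_divide norm_power nX norm_minus_commute)
      also have "\<dots> \<le> x powr M * (C * norm z ^ (s+1)) / (1/2) ^ m"
        using C[OF z1] Th unfolding T_def[symmetric] by (intro divide_mono mult_left_mono power_mono) auto
      also have "\<dots> = C * 2 ^ m * norm E ^ (s+1) * (x powr M * u ^ (s+1))"
        by (simp add: nz power_mult_distrib field_simps)
      also have "x powr M * u ^ (s+1) = x powr (-1 - delta M hv)"
        unfolding u_def delta_def s_def using x0
        by (simp add: powr_pow_aux powr_add[symmetric] algebra_simps)
      also have "C * 2 ^ m * norm E ^ (s+1) * x powr (-1 - delta M hv) \<le> (K1 + K2) * x powr (-1 - delta M hv)"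
      proof (intro mult_right_mono)
        have "C * (2 ^ m * norm E ^ (s+1)) \<le> \<bar>C\<bar> * (2 ^ m * norm E ^ (s+1))"
          by (intro mult_right_mono) auto
        then show "C * 2 ^ m * norm E ^ (s+1) \<le> K1 + K2" using K2 unfolding K1_def mult.assoc by linarith
      qed simp
      finally show "norm (inverse (q_fun M hv E x ^ (hv - 1)) * p_fun M hv E x - q_fun M hv E x) \<le> (K1 + K2) * x powr (-1 - delta M hv)"
        unfolding e1 .
      have e2: "of_real M / of_real x - vector_derivative (q_fun M hv E) (at x) / q_fun M hv E x
          = of_real M * of_nat hv * D / (of_real x * T)"
        unfolding qd q using X0 T0 x0 by (simp add: field_simps)
      have "norm (of_real M * of_nat hv * D / (of_real x * T)) = M * real hv * norm D / (x * norm T)"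
        using M x0 by (simp add: norm_mult norm_divide)
      also have "\<dots> \<le> M * real hv * (C2 * norm z) / (x * (1/2))"
        using D Th x0 M by (intro divide_mono mult_left_mono mult_pos_pos) auto
      also have "\<dots> = K2 * (u / x)" unfolding K2_def nz by (simp add: field_simps)
      also have "u / x = x powr (-1 - M * real hv)"
        unfolding u_def using x0 by (simp add: powr_diff powr_minus divide_inverse powr_add[symmetric])
      also have "\<dots> \<le> x powr (-1 - delta M hv)" using x1 dl by (intro powr_mono) auto
      finally have "norm (of_real M * of_nat hv * D / (of_real x * T)) \<le> K2 * x powr (-1 - delta M hv)"
        using K2 by (simp add: mult_left_mono)
      also have "\<dots> \<le> (K1 + K2) * x powr (-1 - delta M hv)" using K1 by (intro mult_right_mono) auto
      finally show "norm (of_real M / of_real x - vector_derivative (q_fun M hv E) (at x) / q_fun M hv E x) \<le> (K1 + K2) * x powr (-1 - delta M hv)"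
        unfolding e2 .
    qed
  qed
qed




theorem lemma3p1:
  fixes br :: "complex^'d \<Rightarrow> complex^'d \<Rightarrow> complex^'d"
    and n :: nat and A :: "nat \<Rightarrow> nat \<Rightarrow> int"
    and e f hh :: "nat \<Rightarrow> complex^'d"
    and a0 l h :: "complex^'d" and M :: real and E :: complex
  assumes "simple_ADE br n A e f hh"
    and "a0 \<in> lowest_root_space br n A hh" and "a0 \<noteq> 0"
    and "l \<in> cartan n hh" and "M > 0"
    and "h \<in> cartan n hh"
    and "br h (\<Sum>i\<in>{1..n}. e i) = (\<Sum>i\<in>{1..n}. e i)"
    and "br h a0 = - (of_nat (dual_coxeter br n A hh) - 1) *s a0"
  shows "\<forall>k. (\<lambda>x. norm (fst (gauge br h (q_fun M (dual_coxeter br n A hh) E)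
                  (L_conn l (\<Sum>i\<in>{1..n}. e i) a0 M (dual_coxeter br n A hh) E) x) k
               - fst (target_conn l h (\<Sum>i\<in>{1..n}. e i) a0 M (dual_coxeter br n A hh) E x) k))
             \<in> O[at_top](\<lambda>x. x powr (- 1 - delta M (dual_coxeter br n A hh)))
         \<and> (\<lambda>x. norm (snd (gauge br h (q_fun M (dual_coxeter br n A hh) E)
                  (L_conn l (\<Sum>i\<in>{1..n}. e i) a0 M (dual_coxeter br n A hh) E) x)
               - snd (target_conn l h (\<Sum>i\<in>{1..n}. e i) a0 M (dual_coxeter br n A hh) E x)))
             \<in> O[at_top](\<lambda>x. x powr (- 1 - delta M (dual_coxeter br n A hh)))"
proof -
  define hv where "hv = dual_coxeter br n A hh"
  define es where "es = (\<Sum>i\<in>{1..n}. e i)"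
  define Q where "Q = q_fun M hv E"
  define d where "d = delta M hv"
  have hv1: "hv \<ge> 1" unfolding hv_def dual_coxeter_def by simp
  have lb: "lie_bracket br" using assms(1) unfolding simple_ADE_def by blast
  have hh0: "\<forall>i\<in>{1..n}. \<forall>j\<in>{1..n}. br (hh i) (hh j) = 0" using assms(1) unfolding simple_ADE_def by blast
  obtain ch where ch: "h = (\<Sum>i\<in>{1..n}. ch i *s hh i)" using assms(6) unfolding cartan_def by blast
  obtain cl where cl: "l = (\<Sum>i\<in>{1..n}. cl i *s hh i)" using assms(4) unfolding cartan_def by blast
  have hl: "br h l = 0"
    unfolding ch cl using hh0
    by (simp add: br_sumL[OF lb] br_sumR[OF lb] br_smL[OF lb] br_smR[OF lb])
  have hes: "br h es = 1 *s es" using assms(7) unfolding es_def by simp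
  define c1 where "c1 = - (of_nat hv - 1 :: complex)"
  have ha0: "br h a0 = c1 *s a0" using assms(8) unfolding c1_def hv_def .
  obtain K where K: "eventually (\<lambda>x. Q x \<noteq> 0 \<and>
      norm (inverse (Q x ^ (hv - 1)) * p_fun M hv E x - Q x) \<le> K * x powr (-1 - d) \<and>
      norm (of_real M / of_real x - vector_derivative Q (at x) / Q x) \<le> K * x powr (-1 - d)) at_top"
    using main_asym[OF hv1 assms(5), of E] unfolding Q_def d_def by blast
  have pos: "eventually (\<lambda>x::real. x > 0) at_top" by (rule eventually_gt_at_top)
  have comp: "(\<lambda>x. norm (fst (gauge br h Q (L_conn l es a0 M hv E) x) k
               - fst (target_conn l h es a0 M hv E x) k)) \<in> O[at_top](\<lambda>x. x powr (- 1 - d))" for k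
  proof (cases "k = 0")
    case True
    show ?thesis
    proof (rule bigoI[where c = "K * norm h"], rule eventually_mono[OF eventually_conj[OF K pos]], elim conjE)
      fix x :: real assume Q0: "Q x \<noteq> 0" and x0: "x > 0"
        and b: "norm (of_real M / of_real x - vector_derivative Q (at x) / Q x) \<le> K * x powr (-1 - d)"
      have u: "br h (complex_of_real (1 / x) *s l) = 0" by (simp add: br_smR[OF lb] hl)
      have qa: "q_ad br h (Q x) ((1 / of_real x) *s l + es) = (1 / of_real x) *s l + Q x *s es"
        using q_ad_eig[OF lb u hes, of "Q x"] Q0 by (simp add: exp_Ln)
      have "fst (gauge br h Q (L_conn l es a0 M hv E) x) k - fst (target_conn l h es a0 M hv E x) k
        = (of_real M / of_real x - vector_derivative Q (at x) / Q x) *s h"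
        using True Q0 qa unfolding gauge_def L_conn_def target_conn_def Q_def
        by (simp add: vector_ssub_ldistrib vector_sub_rdistrib vector_smult_assoc)
      note eq = this
        have "norm (norm (fst (gauge br h Q (L_conn l es a0 M hv E) x) k - fst (target_conn l h es a0 M hv E x) k)) = norm (of_real M / of_real x - vector_derivative Q (at x) / Q x) * norm h"
          unfolding eq norm_smult_vec by simp
        also have "\<dots> \<le> K * x powr (-1 - d) * norm h" using b by (intro mult_right_mono) auto
        finally show "norm (norm (fst (gauge br h Q (L_conn l es a0 M hv E) x) k - fst (target_conn l h es a0 M hv E x) k))
          \<le> K * norm h * norm (x powr (- 1 - d))"
          using x0 by (simp add: mult_ac)
    qed
  next
    case False
    show ?thesis
    proof (cases "k = 1")
      case True
      show ?thesis
      proof (rule bigoI[where c = "K * norm a0"], rule eventually_mono[OF eventually_conj[OF K pos]], elim conjE)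
        fix x :: real assume Q0: "Q x \<noteq> 0" and x0: "x > 0"
          and b: "norm (inverse (Q x ^ (hv - 1)) * p_fun M hv E x - Q x) \<le> K * x powr (-1 - d)"
        have w: "br h (p_fun M hv E x *s a0) = c1 *s (p_fun M hv E x *s a0)"
          by (simp add: br_smR[OF lb] ha0 vector_smult_assoc mult.commute)
        have ex: "exp (c1 * Ln (Q x)) = inverse (Q x ^ (hv - 1))"
        proof -
          have "c1 = - of_nat (hv - 1)" unfolding c1_def using hv1 by (simp add: of_nat_diff)
          then have "exp (c1 * Ln (Q x)) = inverse (exp (of_nat (hv - 1) * Ln (Q x)))"
            by (simp add: exp_minus)
          also have "\<dots> = inverse (Q x ^ (hv - 1))" using Q0 by (simp add: exp_of_nat_mult exp_Ln)
          finally show ?thesis .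
        qed
        have "fst (gauge br h Q (L_conn l es a0 M hv E) x) k - fst (target_conn l h es a0 M hv E x) k
          = (inverse (Q x ^ (hv - 1)) * p_fun M hv E x - Q x) *s a0"
          using True q_ad_eig[OF lb _ w, of 0 "Q x"] unfolding gauge_def L_conn_def target_conn_def Q_def
          by (simp add: br_0R[OF lb] ex[unfolded Q_def] vector_sub_rdistrib vector_smult_assoc)
        note eq = this
        have "norm (norm (fst (gauge br h Q (L_conn l es a0 M hv E) x) k - fst (target_conn l h es a0 M hv E x) k)) = norm (inverse (Q x ^ (hv - 1)) * p_fun M hv E x - Q x) * norm a0"
          unfolding eq norm_smult_vec by simp
        also have "\<dots> \<le> K * x powr (-1 - d) * norm a0" using b by (intro mult_right_mono) auto
        finally show "norm (norm (fst (gauge br h Q (L_conn l es a0 M hv E) x) k - fst (target_conn l h es a0 M hv E x) k))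
            \<le> K * norm a0 * norm (x powr (- 1 - d))"
          using x0 by (simp add: mult_ac)
      qed
    next
      case False2: False
      have h00: "br h 0 = (0::complex) *s 0" by (simp add: br_0R[OF lb])
      have z: "q_ad br h (Q x) 0 = 0" for x
        using q_ad_eig[OF lb br_0R[OF lb] h00, of "Q x"] by simp
      show ?thesis
        by (rule bigoI[where c = 0]) (use False False2 z in \<open>simp add: gauge_def L_conn_def target_conn_def\<close>)
    qed
  qed
  show ?thesis
    unfolding hv_def[symmetric] es_def[symmetric] Q_def[symmetric] d_def[symmetric]
    by (intro allI conjI comp bigoI[where c = 0]) (simp add: gauge_def L_conn_def target_conn_def)
qed


end
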